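(* Under assumptions (A1)–(A6), for (almost) every $x$, $$\alpha(x)=\Big(1-\frac{\mu_{10}(x)}{\mu_{11}(x)}\Big)\Big(1-\frac{\gamma_0(x)}{\gamma_1(x)}\Big)P(M=1\mid A=1,Y=1,X=x),$$ $$\beta(x)=\Big(1-\frac{\mu_0(x)}{\mu_1(x)}\Big)-\alpha(x),$$ where $\mu_a(x)=P(Y=1\mid A=a,X=x)$.
   Context: Observed data $O=(X,A,M,Y)$ with covariates $X\in\mathbb{R}^d$, binary exposure $A$, binary mediator $M$, binary outcome $Y$. For $a,m\in\{0,1\}$, $Y(a,m)$ is the potential outcome under $A=a,M=m$, $M(a)$ the potential mediator, $Y(a):=Y(a,M(a))$, cross-world $Y(a,M(a'))$ by substitution, all on a common probability space with $O$. $\mu_{am}(x)=P(Y=1\mid A=a,M=m,X=x)$, $\gamma_a(x)=P(M=1\mid A=a,X=x)$. Total probabilities of indirect and direct causation: $\alpha(x)=P(Y(1,M(0))=0,\,Y(0,M(0))=0\mid Y(1,M(1))=1,X=x)$ and $\beta(x)=P(Y(1,M(0))=1,\,Y(0,M(0))=0\mid Y(1,M(1))=1,X=x)$. Assumptions: (A1) $A=a,M=m\Rightarrow Y=Y(a,m)$ and $A=a\Rightarrow M=M(a)$. (A2) $Y(1,1)\ge Y(1,0)\ge Y(0,0)$, $Y(1,1)\ge Y(0,1)$, $M(1)\ge M(0)$. (A3) $A\perp\{Y(1,1),Y(1,0),Y(0,1),Y(0,0),M(1),M(0)\}\mid X$. (A4) $\{Y(1,1),Y(1,0),Y(0,1),Y(0,0)\}\perp\{M(1),M(0)\}\mid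 X$. (A5) for some $\epsilon>0$, $P\{\min_{a,m}P(A=a,M=m\mid X)\ge\epsilon\}=1$. (A6) $P\{P(Y=1\mid A=1,M=1,X)\ge\epsilon\}=1$. *)

theory Defs
  imports "HOL-Probability.Probability"
begin

definition ev :: "'a measure \<Rightarrow> ('a \<Rightarrow> bool) \<Rightarrow> 'a set" where
  "ev M P = {\<omega> \<in> space M. P \<omega>}"

text \<open>Conditional probability of an event given the covariate X, i.e. the
 conditional expectation of its indicator w.r.t. sigma(X), evaluated at outcome w
 (a version of x \<mapsto> P(E | X = x) composed with X).\<close>
definition cprob :: "'a measure \<Rightarrow> ('a \<Rightarrow> 'x::topological_space) \<Rightarrow> 'a set \<Rightarrow> 'a \<Rightarrow> real" where
  "cprob M X E = real_cond_exp M (vimage_algebra (space M) X borel) (indicator E)"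

definition cprob_given :: "'a measure \<Rightarrow> ('a \<Rightarrow> 'x::topological_space) \<Rightarrow> 'a set \<Rightarrow> 'a set \<Rightarrow> 'a \<Rightarrow> real" where
  "cprob_given M X E B \<omega> = cprob M X (E \<inter> B) \<omega> / cprob M X B \<omega>"

definition cond_indep :: "'a measure \<Rightarrow> ('a \<Rightarrow> 'x::topological_space) \<Rightarrow> ('a \<Rightarrow> 'u) \<Rightarrow> ('a \<Rightarrow> 'v) \<Rightarrow> bool" where
  "cond_indep M X U V \<longleftrightarrow>
     (\<forall>S T. AE \<omega> in M. cprob M X (ev M (\<lambda>w. U w \<in> S) \<inter> ev M (\<lambda>w. V w \<in> T)) \<omega>
               = cprob M X (ev M (\<lambda>w. U w \<in> S)) \<omega> * cprob M X (ev M (\<lambda>w. V w \<in> T)) \<omega>)"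

end

theory Submission imports Defs begin
lemma sub: assumes "prob_space M" "X \<in> borel_measurable M"
  shows "sigma_finite_subalgebra M (vimage_algebra (space M) X borel)"
proof -
  interpret prob_space M by fact
  have "subalgebra M (vimage_algebra (space M) X borel)"
    unfolding subalgebra_def using assms(2)
    by (auto simp: sets_vimage_algebra2)
  then have "finite_measure_subalgebra M (vimage_algebra (space M) X borel)"
    by (simp add: finite_measure_axioms finite_measure_subalgebra.intro finite_measure_subalgebra_axioms.intro)
  then show ?thesis by (rule finite_measure_subalgebra_is_sigma_finite)
qed

lemma alg:
  fixes cAYM cAM cAYn cAn cnAM0 cAT1 cnAT0 a1 a0 cYM cYn m1 m0 n1 y11 y10 t1 t0 ca cb e d s cYn2 eps :: real
  assumes i1: "cAYM = a1 * cYM" and i2: "cAM = a1 * m1" and i3: "cAYn = a1 * cYn" and i4: "cAn = a1 * n1"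
    and i5: "cnAM0 = a0 * m0" and i6: "cAT1 = a1 * t1" and i7: "cnAT0 = a0 * t0"
    and j1: "cYM = y11 * m1" and j2: "cYn = y10 * n1" and j3: "ca = e * d"
    and k1: "m1 = d + m0" and k2: "y11 = e + y10" and k3: "t1 = ca + s" and k4: "s = cb + t0"
    and k5: "t1 = cYM + cYn"
    and ep: "eps > 0" and e1: "cAM \<ge> eps" and e2: "cAn \<ge> eps" and e3: "cnAM0 \<ge> eps"
    and e4: "cAYM / cAM \<ge> eps" and n1: "a1 \<ge> 0" and n2: "cYn \<ge> 0"
  shows "ca / t1 = (1 - cAYn / cAn / (cAYM / cAM)) * (1 - cnAM0 / a0 / (cAM / a1)) * (cAYM / cAT1)
       \<and> cb / t1 = 1 - cnAT0 / a0 / (cAT1 / a1) - ca / t1"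
proof -
  have a1: "a1 > 0" using i2 e1 ep n1 by (metis less_eq_real_def mult_zero_left not_less)
  have m1: "m1 > 0" using i2 e1 ep a1 by (metis less_le_trans zero_less_mult_pos)
  have n1': "n1 \<noteq> 0" using i4 e2 ep by auto
  have a0: "a0 \<noteq> 0" using i5 e3 ep by auto
  have "cAYM / cAM = y11" using i1 i2 j1 a1 m1 by (simp add: field_simps)
  then have y: "y11 > 0" using e4 ep by linarith
  have t: "t1 > 0" using k5 j1 n2 y m1 by (smt (verit) mult_pos_pos)
  have r1: "cAYn / cAn = y10" using i3 i4 j2 a1 n1' by (simp add: field_simps)
  have r2: "cAYM / cAM = y11" using i1 i2 j1 a1 m1 by (simp add: field_simps)
  have r3: "cnAM0 / a0 = m0" using i5 a0 by simp
  have r4: "cAM / a1 = m1" using i2 a1 by simp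
  have r5: "cAYM / cAT1 = y11 * m1 / t1" using i1 i6 j1 a1 by simp
  have r6: "cnAT0 / a0 = t0" using i7 a0 by simp
  have r7: "cAT1 / a1 = t1" using i6 a1 by simp
  have q1: "1 - y10 / y11 = e / y11" using k2 y by (simp add: field_simps)
  have q2: "1 - m0 / m1 = d / m1" using k1 m1 by (simp add: field_simps)
  have q3: "e / y11 * (d / m1) * (y11 * m1 / t1) = ca / t1" using y m1 j3 by (simp add: field_simps)
  have q5: "1 - t0 / t1 - ca / t1 = (t1 - t0 - ca) / t1" using t by (simp add: field_simps)
  have q6: "t1 - t0 - ca = cb" using k3 k4 by simp
  have q4: "1 - t0 / t1 - ca / t1 = cb / t1" using q5 q6 by simp
  show ?thesis unfolding r1 r2 r3 r4 r5 r6 r7 q1 q2 q3 q4 by simp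
qed

lemma ev_int: "ev M P \<inter> ev M Q = ev M (\<lambda>w. P w \<and> Q w)" by (auto simp: ev_def)
lemma ev_cong: "(\<And>w. w \<in> space M \<Longrightarrow> P w = Q w) \<Longrightarrow> ev M P = ev M Q" by (auto simp: ev_def)

lemma cprob_add:
  assumes "prob_space M" "X \<in> borel_measurable M" "ev M P \<in> sets M" "ev M Q \<in> sets M"
    "\<And>w. w \<in> space M \<Longrightarrow> \<not> (P w \<and> Q w)"
  shows "AE \<omega> in M. cprob M X (ev M (\<lambda>w. P w \<or> Q w)) \<omega> = cprob M X (ev M P) \<omega> + cprob M X (ev M Q) \<omega>"
proof -
  interpret prob_space M by fact
  interpret sigma_finite_subalgebra M "vimage_algebra (space M) X borel" using sub assms by blast
  have e: "ev M (\<lambda>w. P w \<or> Q w) = ev M P \<union> ev M Q" by (auto simp: ev_def)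
  have d: "ev M P \<inter> ev M Q = {}" using assms(5) by (auto simp: ev_def)
  have i: "indicator (ev M P \<union> ev M Q) = (\<lambda>x. indicator (ev M P) x + indicator (ev M Q) x :: real)"
    using indicator_disj_union[OF d] by auto
  show ?thesis unfolding cprob_def e i
    by (rule real_cond_exp_add) (auto intro!: integrable_real_indicator simp: assms less_top[symmetric])
qed

lemma cprob_nonneg:
  assumes "prob_space M" "X \<in> borel_measurable M" "E \<in> sets M"
  shows "AE \<omega> in M. cprob M X E \<omega> \<ge> 0"
proof -
  interpret prob_space M by fact
  interpret sigma_finite_subalgebra M "vimage_algebra (space M) X borel" using sub assms by blast
  show ?thesis unfolding cprob_def
    by (rule real_cond_exp_pos) (use assms in auto)
qed

lemma ci:
  assumes "cond_indep M X U V"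
  shows "AE \<omega> in M. cprob M X (ev M (\<lambda>w. P (U w) \<and> Q (V w))) \<omega>
     = cprob M X (ev M (\<lambda>w. P (U w))) \<omega> * cprob M X (ev M (\<lambda>w. Q (V w))) \<omega>"
proof -
  have "AE \<omega> in M. cprob M X (ev M (\<lambda>w. U w \<in> Collect P) \<inter> ev M (\<lambda>w. V w \<in> Collect Q)) \<omega>
               = cprob M X (ev M (\<lambda>w. U w \<in> Collect P)) \<omega> * cprob M X (ev M (\<lambda>w. V w \<in> Collect Q)) \<omega>"
    using assms unfolding cond_indep_def by blast
  then show ?thesis by (simp add: ev_int)
qed
theorem proposition10:
  fixes M :: "'a measure"
    and X :: "'a \<Rightarrow> real ^ 'd"
    and A Mo Y :: "'a \<Rightarrow> bool"
    and Yp :: "bool \<Rightarrow> bool \<Rightarrow> 'a \<Rightarrow> bool"   (* Yp a m = Y(a,m) *)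
    and Mp :: "bool \<Rightarrow> 'a \<Rightarrow> bool"           (* Mp a = M(a) *)
  assumes prob: "prob_space M"
    and meas_X: "X \<in> borel_measurable M"
    and meas_A: "A \<in> measurable M (count_space UNIV)"
    and meas_Mo: "Mo \<in> measurable M (count_space UNIV)"
    and meas_Y: "Y \<in> measurable M (count_space UNIV)"
    and meas_Yp: "\<And>a m. Yp a m \<in> measurable M (count_space UNIV)"
    and meas_Mp: "\<And>a. Mp a \<in> measurable M (count_space UNIV)"
    (* (A1) consistency *)
    and A1_Y: "\<And>\<omega> a m. \<omega> \<in> space M \<Longrightarrow> A \<omega> = a \<Longrightarrow> Mo \<omega> = m \<Longrightarrow> Y \<omega> = Yp a m \<omega>"
    and A1_M: "\<And>\<omega> a. \<omega> \<in> space M \<Longrightarrow> A \<omega> = a \<Longrightarrow> Mo \<omega> = Mp a \<omega>"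
    (* (A2) monotonicity *)
    and A2: "\<And>\<omega>. \<omega> \<in> space M \<Longrightarrow>
               Yp True False \<omega> \<le> Yp True True \<omega> \<and> Yp False False \<omega> \<le> Yp True False \<omega>
             \<and> Yp False True \<omega> \<le> Yp True True \<omega> \<and> Mp False \<omega> \<le> Mp True \<omega>"
    (* (A3) *)
    and A3: "cond_indep M X A
               (\<lambda>\<omega>. (Yp True True \<omega>, Yp True False \<omega>, Yp False True \<omega>, Yp False False \<omega>,
                      Mp True \<omega>, Mp False \<omega>))"
    (* (A4) *)
    and A4: "cond_indep M X
               (\<lambda>\<omega>. (Yp True True \<omega>, Yp True False \<omega>, Yp False True \<omega>, Yp False False \<omega>))
               (\<lambda>\<omega>. (Mp True \<omega>, Mp False \<omega>))"
    (* (A5), (A6) with a common epsilon *)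
    and A56: "\<exists>\<epsilon>>0.
               (AE \<omega> in M. \<forall>a m. cprob M X (ev M (\<lambda>w. A w = a \<and> Mo w = m)) \<omega> \<ge> \<epsilon>)
             \<and> (AE \<omega> in M. cprob_given M X (ev M Y) (ev M (\<lambda>w. A w \<and> Mo w)) \<omega> \<ge> \<epsilon>)"
  shows "AE \<omega> in M.
     (let
        \<mu>\<^sub>1\<^sub>1 = cprob_given M X (ev M Y) (ev M (\<lambda>w. A w \<and> Mo w)) \<omega>;
        \<mu>\<^sub>1\<^sub>0 = cprob_given M X (ev M Y) (ev M (\<lambda>w. A w \<and> \<not> Mo w)) \<omega>;
        \<gamma>\<^sub>1 = cprob_given M X (ev M Mo) (ev M (\<lambda>w. A w)) \<omega>;
        \<gamma>\<^sub>0 = cprob_given M X (ev M Mo) (ev M (\<lambda>w. \<not> A w)) \<omega>;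
        \<mu>\<^sub>1 = cprob_given M X (ev M Y) (ev M (\<lambda>w. A w)) \<omega>;
        \<mu>\<^sub>0 = cprob_given M X (ev M Y) (ev M (\<lambda>w. \<not> A w)) \<omega>;
        pM = cprob_given M X (ev M Mo) (ev M (\<lambda>w. A w \<and> Y w)) \<omega>;
        \<alpha> = cprob_given M X
               (ev M (\<lambda>w. \<not> Yp True (Mp False w) w \<and> \<not> Yp False (Mp False w) w))
               (ev M (\<lambda>w. Yp True (Mp True w) w)) \<omega>;
        \<beta> = cprob_given M X
               (ev M (\<lambda>w. Yp True (Mp False w) w \<and> \<not> Yp False (Mp False w) w))
               (ev M (\<lambda>w. Yp True (Mp True w) w)) \<omega>
      in \<alpha> = (1 - \<mu>\<^sub>1\<^sub>0 / \<mu>\<^sub>1\<^sub>1) * (1 - \<gamma>\<^sub>0 / \<gamma>\<^sub>1) * pM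
       \<and> \<beta> = (1 - \<mu>\<^sub>0 / \<mu>\<^sub>1) - \<alpha>)"
proof -
  note [measurable] = meas_A meas_Mo meas_Y meas_Yp meas_Mp
  have evm: "\<And>P::'a\<Rightarrow>bool. P \<in> measurable M (count_space UNIV) \<Longrightarrow> ev M P \<in> sets M" unfolding ev_def by (rule predE)
  have T: "\<And>w. w \<in> space M \<Longrightarrow> A w \<Longrightarrow> Mo w = Mp True w \<and> Y w = Yp True (Mp True w) w"
  proof -
    fix w assume w: "w \<in> space M" "A w"
    have "Mo w = Mp True w" using A1_M[of w True] w by simp
    then show "Mo w = Mp True w \<and> Y w = Yp True (Mp True w) w" using A1_Y[of w True "Mp True w"] w by simp
  qed
  have F: "\<And>w. w \<in> space M \<Longrightarrow> \<not> A w \<Longrightarrow> Mo w = Mp False w \<and> Y w = Yp False (Mp False w) w"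
  proof -
    fix w assume w: "w \<in> space M" "\<not> A w"
    have "Mo w = Mp False w" using A1_M[of w False] w by simp
    then show "Mo w = Mp False w \<and> Y w = Yp False (Mp False w) w" using A1_Y[of w False "Mp False w"] w by simp
  qed
  have s1: "ev M Y \<inter> ev M (\<lambda>w. A w \<and> Mo w) = ev M (\<lambda>w. A w \<and> (Yp True True w \<and> Mp True w))"
    unfolding ev_int apply (rule ev_cong) subgoal for w using T[of w] F[of w] by (cases "Mp True w"; cases "Mp False w") auto done
  have s3: "ev M Y \<inter> ev M (\<lambda>w. A w \<and> \<not> Mo w) = ev M (\<lambda>w. A w \<and> (Yp True False w \<and> \<not> Mp True w))"
    unfolding ev_int apply (rule ev_cong) subgoal for w using T[of w] F[of w] by (cases "Mp True w"; cases "Mp False w") auto done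
  have s5: "ev M Mo \<inter> ev M A = ev M (\<lambda>w. A w \<and> Mp True w)"
    unfolding ev_int apply (rule ev_cong) subgoal for w using T[of w] F[of w] by (cases "Mp True w"; cases "Mp False w") auto done
  have s6: "ev M Mo \<inter> ev M (\<lambda>w. \<not> A w) = ev M (\<lambda>w. \<not> A w \<and> Mp False w)"
    unfolding ev_int apply (rule ev_cong) subgoal for w using T[of w] F[of w] by (cases "Mp True w"; cases "Mp False w") auto done
  have s8: "ev M Y \<inter> ev M A = ev M (\<lambda>w. A w \<and> (Mp True w \<and> Yp True True w \<or> \<not> Mp True w \<and> Yp True False w))"
    unfolding ev_int apply (rule ev_cong) subgoal for w using T[of w] F[of w] by (cases "Mp True w"; cases "Mp False w") auto done
  have s9: "ev M Y \<inter> ev M (\<lambda>w. \<not> A w) = ev M (\<lambda>w. \<not> A w \<and> (Mp False w \<and> Yp False True w \<or> \<not> Mp False w \<and> Yp False False w))"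
    unfolding ev_int apply (rule ev_cong) subgoal for w using T[of w] F[of w] by (cases "Mp True w"; cases "Mp False w") auto done
  have s10: "ev M Mo \<inter> ev M (\<lambda>w. A w \<and> Y w) = ev M (\<lambda>w. A w \<and> (Yp True True w \<and> Mp True w))"
    unfolding ev_int apply (rule ev_cong) subgoal for w using T[of w] F[of w] by (cases "Mp True w"; cases "Mp False w") auto done
  have sa: "ev M (\<lambda>w. \<not> Yp True (Mp False w) w \<and> \<not> Yp False (Mp False w) w) \<inter> ev M (\<lambda>w. Yp True (Mp True w) w)
      = ev M (\<lambda>w. (Yp True True w \<and> \<not> Yp True False w) \<and> (Mp True w \<and> \<not> Mp False w))"
    unfolding ev_int apply (rule ev_cong) subgoal for w using A2[of w] by (cases "Mp True w"; cases "Mp False w") auto done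
  have sb: "ev M (\<lambda>w. Yp True (Mp False w) w \<and> \<not> Yp False (Mp False w) w) \<inter> ev M (\<lambda>w. Yp True (Mp True w) w)
      = ev M (\<lambda>w. (Mp False w \<and> Yp True True w \<or> \<not> Mp False w \<and> Yp True False w) \<and> \<not> (Mp False w \<and> Yp False True w \<or> \<not> Mp False w \<and> Yp False False w))"
    unfolding ev_int apply (rule ev_cong) subgoal for w using A2[of w] by (cases "Mp True w"; cases "Mp False w") auto done
  have s2: "ev M (\<lambda>w. A w \<and> Mo w) = ev M (\<lambda>w. A w \<and> Mp True w)"
    apply (rule ev_cong) subgoal for w using T[of w] F[of w] by (cases "Mp True w"; cases "Mp False w") auto done
  have s4: "ev M (\<lambda>w. A w \<and> \<not> Mo w) = ev M (\<lambda>w. A w \<and> \<not> Mp True w)"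
    apply (rule ev_cong) subgoal for w using T[of w] F[of w] by (cases "Mp True w"; cases "Mp False w") auto done
  have s7: "ev M (\<lambda>w. A w \<and> Y w) = ev M (\<lambda>w. A w \<and> (Mp True w \<and> Yp True True w \<or> \<not> Mp True w \<and> Yp True False w))"
    apply (rule ev_cong) subgoal for w using T[of w] F[of w] by (cases "Mp True w"; cases "Mp False w") auto done
  have sT1: "ev M (\<lambda>w. Yp True (Mp True w) w) = ev M (\<lambda>w. Mp True w \<and> Yp True True w \<or> \<not> Mp True w \<and> Yp True False w)"
    apply (rule ev_cong) subgoal for w using T[of w] F[of w] by (cases "Mp True w"; cases "Mp False w") auto done

  have cadd: "\<And>P Q R. P \<in> measurable M (count_space UNIV) \<Longrightarrow> Q \<in> measurable M (count_space UNIV)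
     \<Longrightarrow> (\<And>w. w \<in> space M \<Longrightarrow> \<not> (P w \<and> Q w)) \<Longrightarrow> (\<And>w. w \<in> space M \<Longrightarrow> R w = (P w \<or> Q w))
     \<Longrightarrow> AE \<omega> in M. cprob M X (ev M R) \<omega> = cprob M X (ev M P) \<omega> + cprob M X (ev M Q) \<omega>"
  proof -
    fix P Q R :: "'a \<Rightarrow> bool"
    assume h: "P \<in> measurable M (count_space UNIV)" "Q \<in> measurable M (count_space UNIV)"
      "\<And>w. w \<in> space M \<Longrightarrow> \<not> (P w \<and> Q w)" "\<And>w. w \<in> space M \<Longrightarrow> R w = (P w \<or> Q w)"
    have "ev M R = ev M (\<lambda>w. P w \<or> Q w)" by (rule ev_cong) (use h in auto)
    then show "AE \<omega> in M. cprob M X (ev M R) \<omega> = cprob M X (ev M P) \<omega> + cprob M X (ev M Q) \<omega>"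
      using cprob_add[OF prob meas_X evm[OF h(1)] evm[OF h(2)] h(3)] by simp
  qed
  have cnn: "\<And>P. P \<in> measurable M (count_space UNIV) \<Longrightarrow> AE \<omega> in M. cprob M X (ev M P) \<omega> \<ge> 0"
    using cprob_nonneg[OF prob meas_X] evm by blast
  have i1: "AE \<omega> in M. cprob M X (ev M (\<lambda>w. A w \<and> (Yp True True w \<and> Mp True w))) \<omega> = cprob M X (ev M A) \<omega> * cprob M X (ev M (\<lambda>w. Yp True True w \<and> Mp True w)) \<omega>"
    using ci[OF A3, of "\<lambda>x. x" "\<lambda>(y11,y10,y01,y00,m1,m0). y11 \<and> m1"] by simp
  have i2: "AE \<omega> in M. cprob M X (ev M (\<lambda>w. A w \<and> Mp True w)) \<omega> = cprob M X (ev M A) \<omega> * cprob M X (ev M (Mp True)) \<omega>"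
    using ci[OF A3, of "\<lambda>x. x" "\<lambda>(y11,y10,y01,y00,m1,m0). m1"] by simp
  have i3: "AE \<omega> in M. cprob M X (ev M (\<lambda>w. A w \<and> (Yp True False w \<and> \<not> Mp True w))) \<omega> = cprob M X (ev M A) \<omega> * cprob M X (ev M (\<lambda>w. Yp True False w \<and> \<not> Mp True w)) \<omega>"
    using ci[OF A3, of "\<lambda>x. x" "\<lambda>(y11,y10,y01,y00,m1,m0). y10 \<and> \<not> m1"] by simp
  have i4: "AE \<omega> in M. cprob M X (ev M (\<lambda>w. A w \<and> \<not> Mp True w)) \<omega> = cprob M X (ev M A) \<omega> * cprob M X (ev M (\<lambda>w. \<not> Mp True w)) \<omega>"
    using ci[OF A3, of "\<lambda>x. x" "\<lambda>(y11,y10,y01,y00,m1,m0). \<not> m1"] by simp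
  have i5: "AE \<omega> in M. cprob M X (ev M (\<lambda>w. \<not> A w \<and> Mp False w)) \<omega> = cprob M X (ev M (\<lambda>w. \<not> A w)) \<omega> * cprob M X (ev M (Mp False)) \<omega>"
    using ci[OF A3, of "Not" "\<lambda>(y11,y10,y01,y00,m1,m0). m0"] by simp
  have i6: "AE \<omega> in M. cprob M X (ev M (\<lambda>w. A w \<and> (Mp True w \<and> Yp True True w \<or> \<not> Mp True w \<and> Yp True False w))) \<omega> = cprob M X (ev M A) \<omega> * cprob M X (ev M (\<lambda>w. Mp True w \<and> Yp True True w \<or> \<not> Mp True w \<and> Yp True False w)) \<omega>"
    using ci[OF A3, of "\<lambda>x. x" "\<lambda>(y11,y10,y01,y00,m1,m0). m1 \<and> y11 \<or> \<not> m1 \<and> y10"] by simp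
  have i7: "AE \<omega> in M. cprob M X (ev M (\<lambda>w. \<not> A w \<and> (Mp False w \<and> Yp False True w \<or> \<not> Mp False w \<and> Yp False False w))) \<omega> = cprob M X (ev M (\<lambda>w. \<not> A w)) \<omega> * cprob M X (ev M (\<lambda>w. Mp False w \<and> Yp False True w \<or> \<not> Mp False w \<and> Yp False False w)) \<omega>"
    using ci[OF A3, of "Not" "\<lambda>(y11,y10,y01,y00,m1,m0). m0 \<and> y01 \<or> \<not> m0 \<and> y00"] by simp
  have j1: "AE \<omega> in M. cprob M X (ev M (\<lambda>w. Yp True True w \<and> Mp True w)) \<omega> = cprob M X (ev M (Yp True True)) \<omega> * cprob M X (ev M (Mp True)) \<omega>"
    using ci[OF A4, of "\<lambda>(y11,y10,y01,y00). y11" "\<lambda>(m1,m0). m1"] by simp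
  have j2: "AE \<omega> in M. cprob M X (ev M (\<lambda>w. Yp True False w \<and> \<not> Mp True w)) \<omega> = cprob M X (ev M (Yp True False)) \<omega> * cprob M X (ev M (\<lambda>w. \<not> Mp True w)) \<omega>"
    using ci[OF A4, of "\<lambda>(y11,y10,y01,y00). y10" "\<lambda>(m1,m0). \<not> m1"] by simp
  have j3: "AE \<omega> in M. cprob M X (ev M (\<lambda>w. (Yp True True w \<and> \<not> Yp True False w) \<and> (Mp True w \<and> \<not> Mp False w))) \<omega> = cprob M X (ev M (\<lambda>w. Yp True True w \<and> \<not> Yp True False w)) \<omega> * cprob M X (ev M (\<lambda>w. Mp True w \<and> \<not> Mp False w)) \<omega>"
    using ci[OF A4, of "\<lambda>(y11,y10,y01,y00). y11 \<and> \<not> y10" "\<lambda>(m1,m0). m1 \<and> \<not> m0"] by simp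
  have k1: "AE \<omega> in M. cprob M X (ev M (Mp True)) \<omega> = cprob M X (ev M (\<lambda>w. Mp True w \<and> \<not> Mp False w)) \<omega> + cprob M X (ev M (Mp False)) \<omega>"
    apply (rule cadd) apply measurable apply (auto dest!: A2 simp: le_bool_def) done
  have k2: "AE \<omega> in M. cprob M X (ev M (Yp True True)) \<omega> = cprob M X (ev M (\<lambda>w. Yp True True w \<and> \<not> Yp True False w)) \<omega> + cprob M X (ev M (Yp True False)) \<omega>"
    apply (rule cadd) apply measurable apply (auto dest!: A2 simp: le_bool_def) done
  have k3: "AE \<omega> in M. cprob M X (ev M (\<lambda>w. Mp True w \<and> Yp True True w \<or> \<not> Mp True w \<and> Yp True False w)) \<omega>
     = cprob M X (ev M (\<lambda>w. (Yp True True w \<and> \<not> Yp True False w) \<and> (Mp True w \<and> \<not> Mp False w))) \<omega>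
       + cprob M X (ev M (\<lambda>w. Mp False w \<and> Yp True True w \<or> \<not> Mp False w \<and> Yp True False w)) \<omega>"
    apply (rule cadd) apply measurable apply (auto dest!: A2 simp: le_bool_def) done
  have k4: "AE \<omega> in M. cprob M X (ev M (\<lambda>w. Mp False w \<and> Yp True True w \<or> \<not> Mp False w \<and> Yp True False w)) \<omega>
     = cprob M X (ev M (\<lambda>w. (Mp False w \<and> Yp True True w \<or> \<not> Mp False w \<and> Yp True False w) \<and> \<not> (Mp False w \<and> Yp False True w \<or> \<not> Mp False w \<and> Yp False False w))) \<omega>
       + cprob M X (ev M (\<lambda>w. Mp False w \<and> Yp False True w \<or> \<not> Mp False w \<and> Yp False False w)) \<omega>"
    apply (rule cadd) apply measurable apply (auto dest!: A2 simp: le_bool_def) done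
  have k5: "AE \<omega> in M. cprob M X (ev M (\<lambda>w. Mp True w \<and> Yp True True w \<or> \<not> Mp True w \<and> Yp True False w)) \<omega>
     = cprob M X (ev M (\<lambda>w. Yp True True w \<and> Mp True w)) \<omega> + cprob M X (ev M (\<lambda>w. Yp True False w \<and> \<not> Mp True w)) \<omega>"
    apply (rule cadd) apply measurable apply auto done
  have n1: "AE \<omega> in M. cprob M X (ev M A) \<omega> \<ge> 0" by (rule cnn) measurable
  have n2: "AE \<omega> in M. cprob M X (ev M (\<lambda>w. Yp True False w \<and> \<not> Mp True w)) \<omega> \<ge> 0" by (rule cnn) measurable
  obtain eps :: real where h: "eps > 0 \<and>
               (AE \<omega> in M. \<forall>a m. cprob M X (ev M (\<lambda>w. A w = a \<and> Mo w = m)) \<omega> \<ge> eps)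
             \<and> (AE \<omega> in M. cprob_given M X (ev M Y) (ev M (\<lambda>w. A w \<and> Mo w)) \<omega> \<ge> eps)"
    using A56 by (rule exE)
  note ep = h[THEN conjunct1]
  note A5 = h[THEN conjunct2, THEN conjunct1]
  note A6 = h[THEN conjunct2, THEN conjunct2]
  have f1: "ev M (\<lambda>w. A w = True \<and> Mo w = True) = ev M (\<lambda>w. A w \<and> Mp True w)"
    apply (rule ev_cong) subgoal for w using T[of w] F[of w] by (cases "A w") auto done
  have f2: "ev M (\<lambda>w. A w = True \<and> Mo w = False) = ev M (\<lambda>w. A w \<and> \<not> Mp True w)"
    apply (rule ev_cong) subgoal for w using T[of w] F[of w] by (cases "A w") auto done
  have f3: "ev M (\<lambda>w. A w = False \<and> Mo w = True) = ev M (\<lambda>w. \<not> A w \<and> Mp False w)"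
    apply (rule ev_cong) subgoal for w using T[of w] F[of w] by (cases "A w") auto done
  have e1: "AE \<omega> in M. cprob M X (ev M (\<lambda>w. A w \<and> Mp True w)) \<omega> \<ge> eps"
    using A5 proof eventually_elim
    case (elim \<omega>)
    then have "cprob M X (ev M (\<lambda>w. A w = True \<and> Mo w = True)) \<omega> \<ge> eps" by (rule allE) (rule allE)
    then show ?case unfolding f1 .
  qed
  have e2: "AE \<omega> in M. cprob M X (ev M (\<lambda>w. A w \<and> \<not> Mp True w)) \<omega> \<ge> eps"
    using A5 proof eventually_elim
    case (elim \<omega>)
    then have "cprob M X (ev M (\<lambda>w. A w = True \<and> Mo w = False)) \<omega> \<ge> eps" by (rule allE) (rule allE)
    then show ?case unfolding f2 .
  qed
  have e3: "AE \<omega> in M. cprob M X (ev M (\<lambda>w. \<not> A w \<and> Mp False w)) \<omega> \<ge> eps"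
    using A5 proof eventually_elim
    case (elim \<omega>)
    then have "cprob M X (ev M (\<lambda>w. A w = False \<and> Mo w = True)) \<omega> \<ge> eps" by (rule allE) (rule allE)
    then show ?case unfolding f3 .
  qed
  have e4: "AE \<omega> in M. cprob M X (ev M (\<lambda>w. A w \<and> (Yp True True w \<and> Mp True w))) \<omega> / cprob M X (ev M (\<lambda>w. A w \<and> Mp True w)) \<omega> \<ge> eps"
    using A6[unfolded cprob_given_def, unfolded s1, unfolded s2] .
  show ?thesis
    using i1 i2 i3 i4 i5 i6 i7 j1 j2 j3 k1 k2 k3 k4 k5 e1 e2 e3 e4 n1 n2
  proof eventually_elim
    case (elim \<omega>)
    show ?case unfolding Let_def cprob_given_def
      unfolding s1 s3 s5 s6 s8 s9 s10 sa sb
      unfolding s2 s4 s7 sT1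
      by (rule alg[OF elim(1-15) ep elim(16-21)])
  qed
qed
end
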